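(* Let $n\ge1$, $\tau>0$ and $\mathbf{s}=[s_1,\dots,s_n]^T\in\mathbb{R}^n$ (entries not necessarily distinct). Let $\widehat{P}\in\mathbb{R}^{n\times n}$ be defined by $$\widehat{P}[i,j]=\frac{\exp\big(((n+1-2i)s_j-\sum_{k=1}^n|s_j-s_k|)/\tau\big)}{\sum_{l=1}^n\exp\big(((n+1-2i)s_l-\sum_{k=1}^n|s_l-s_k|)/\tau\big)}.$$ Define $z_1,\dots,z_n$ recursively as follows: for row $i$, let $M_i=\{j: \widehat{P}[i,j]=\max_{j'}\widehat{P}[i,j']\}$; if some $j\in M_i$ is not among $z_1,\dots,z_{i-1}$, let $z_i$ be the smallest such $j$; otherwise let $z_i$ be the smallest element of $M_i$. Then $\mathbf{z}=[z_1,\dots,z_n]^T$ is a permutation of $\{1,\dots,n\}$. *)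

theory Defs
  imports Complex_Main
begin

text \<open>Vectors s in R^n are functions nat => real, only indices 1..n matter.
  Rows and columns of the matrix P-hat are indexed by 1..n.\<close>

definition score :: "nat \<Rightarrow> real \<Rightarrow> (nat \<Rightarrow> real) \<Rightarrow> nat \<Rightarrow> nat \<Rightarrow> real" where
  "score n \<tau> s i j =
     exp (((real n + 1 - 2 * real i) * s j - (\<Sum>k=1..n. \<bar>s j - s k\<bar>)) / \<tau>)"

definition Phat :: "nat \<Rightarrow> real \<Rightarrow> (nat \<Rightarrow> real) \<Rightarrow> nat \<Rightarrow> nat \<Rightarrow> real" where
  "Phat n \<tau> s i j = score n \<tau> s i j / (\<Sum>l=1..n. score n \<tau> s i l)"

definition rowmax :: "nat \<Rightarrow> real \<Rightarrow> (nat \<Rightarrow> real) \<Rightarrow> nat \<Rightarrow> nat set" where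
  "rowmax n \<tau> s i = {j \<in> {1..n}. Phat n \<tau> s i j = Max (Phat n \<tau> s i ` {1..n})}"

definition choose_z :: "nat \<Rightarrow> real \<Rightarrow> (nat \<Rightarrow> real) \<Rightarrow> nat \<Rightarrow> nat set \<Rightarrow> nat" where
  "choose_z n \<tau> s i Z =
     (if \<exists>j \<in> rowmax n \<tau> s i. j \<notin> Z
      then Min {j \<in> rowmax n \<tau> s i. j \<notin> Z}
      else Min (rowmax n \<tau> s i))"

fun zlist :: "nat \<Rightarrow> real \<Rightarrow> (nat \<Rightarrow> real) \<Rightarrow> nat \<Rightarrow> nat list" where
  "zlist n \<tau> s 0 = []"
| "zlist n \<tau> s (Suc i) = zlist n \<tau> s i @ [choose_z n \<tau> s (Suc i) (set (zlist n \<tau> s i))]"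

definition zvec :: "nat \<Rightarrow> real \<Rightarrow> (nat \<Rightarrow> real) \<Rightarrow> nat \<Rightarrow> nat" where
  "zvec n \<tau> s i = zlist n \<tau> s i ! (i - 1)"

end

theory Submission
  imports Defs
begin

definition HH :: "nat \<Rightarrow> (nat \<Rightarrow> real) \<Rightarrow> real \<Rightarrow> real \<Rightarrow> real" where
  "HH n s c x = c * x - (\<Sum>k=1..n. \<bar>x - s k\<bar>)"

definition Gv :: "nat \<Rightarrow> (nat \<Rightarrow> real) \<Rightarrow> real \<Rightarrow> nat" where
  "Gv n s v = card {k\<in>{1..n}. v < s k}"

definition Ev :: "nat \<Rightarrow> (nat \<Rightarrow> real) \<Rightarrow> real \<Rightarrow> nat" where
  "Ev n s v = card {k\<in>{1..n}. v \<le> s k}"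

lemma card_split: "finite S \<Longrightarrow> card {k\<in>S. P k} + card {k\<in>S. \<not> P k} = card S"
proof -
  assume "finite S"
  have "S = {k\<in>S. P k} \<union> {k\<in>S. \<not> P k}" by auto
  then show ?thesis using \<open>finite S\<close>
    by (metis (no_types, lifting) card_Un_disjoint disjoint_iff finite_Un mem_Collect_eq)
qed

lemma sum_if_pm:
  fixes a :: real
  assumes "finite S"
  shows "(\<Sum>k\<in>S. if P k then a else - a) = a * card {k\<in>S. P k} - a * card {k\<in>S. \<not> P k}"
proof -
  have "(\<Sum>k\<in>S. if P k then a else - a) = (\<Sum>k\<in>{k\<in>S. P k}. a) + (\<Sum>k\<in>{k\<in>S. \<not> P k}. - a)"
    using assms by (simp add: sum.If_cases Int_def)
  then show ?thesis by simp
qed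

lemma L1:
  assumes "x < y"
  shows "HH n s c y - HH n s c x \<le> (y-x)*(c - card{k\<in>{1..n}. s k \<le> x} + card{k\<in>{1..n}. \<not> s k \<le> x})"
proof -
  have "(y-x) * card{k\<in>{1..n}. s k \<le> x} - (y-x) * card{k\<in>{1..n}. \<not> s k \<le> x} = (\<Sum>k=1..n. if s k \<le> x then (y-x) else -(y-x))"
    by (rule sum_if_pm[symmetric]) simp
  also have "\<dots> \<le> (\<Sum>k=1..n. \<bar>y - s k\<bar> - \<bar>x - s k\<bar>)"
    by (rule sum_mono) (use assms in \<open>auto simp: abs_if\<close>)
  finally have *: "(\<Sum>k=1..n. \<bar>y - s k\<bar>) - (\<Sum>k=1..n. \<bar>x - s k\<bar>) \<ge> (y-x) * card{k\<in>{1..n}. s k \<le> x} - (y-x) * card{k\<in>{1..n}. \<not> s k \<le> x}"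
    by (simp add: sum_subtractf)
  show ?thesis unfolding HH_def using * by (simp add: algebra_simps)
qed

lemma L2:
  assumes "x < y"
  shows "HH n s c y - HH n s c x \<ge> (y-x)*(c - card{k\<in>{1..n}. s k < y} + card{k\<in>{1..n}. \<not> s k < y})"
proof -
  have "(\<Sum>k=1..n. \<bar>y - s k\<bar> - \<bar>x - s k\<bar>) \<le> (\<Sum>k=1..n. if s k < y then (y-x) else -(y-x))"
    by (rule sum_mono) (use assms in \<open>auto simp: abs_if\<close>)
  also have "\<dots> = (y-x) * card{k\<in>{1..n}. s k < y} - (y-x) * card{k\<in>{1..n}. \<not> s k < y}"
    by (rule sum_if_pm) simp
  finally have *: "(\<Sum>k=1..n. \<bar>y - s k\<bar>) - (\<Sum>k=1..n. \<bar>x - s k\<bar>) \<le> (y-x) * card{k\<in>{1..n}. s k < y} - (y-x) * card{k\<in>{1..n}. \<not> s k < y}"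
    by (simp add: sum_subtractf)
  show ?thesis unfolding HH_def using * by (simp add: algebra_simps)
qed


lemma score_HH: "score n \<tau> s i j = exp (HH n s (real n + 1 - 2 * real i) (s j) / \<tau>)"
  unfolding score_def HH_def by simp

lemma rowmax_iff:
  assumes "\<tau> > 0" "n \<ge> 1"
  shows "j \<in> rowmax n \<tau> s i \<longleftrightarrow> j \<in> {1..n} \<and>
    (\<forall>j'\<in>{1..n}. HH n s (real n + 1 - 2 * real i) (s j') \<le> HH n s (real n + 1 - 2 * real i) (s j))"
proof -
  define c where "c = real n + 1 - 2 * real i"
  define D where "D = (\<Sum>l=1..n. score n \<tau> s i l)"
  have D: "D > 0" unfolding D_def using assms by (intro sum_pos) (auto simp: score_def)
  have P: "Phat n \<tau> s i j = exp (HH n s c (s j) / \<tau>) / D" for j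
    unfolding Phat_def D_def c_def score_HH ..
  have le: "Phat n \<tau> s i j' \<le> Phat n \<tau> s i j \<longleftrightarrow> HH n s c (s j') \<le> HH n s c (s j)" for j j'
    unfolding P using D assms(1) by (simp add: divide_le_cancel)
  have fin: "finite (Phat n \<tau> s i ` {1..n})" by simp
  have "j \<in> rowmax n \<tau> s i \<longleftrightarrow> j \<in> {1..n} \<and> (\<forall>j'\<in>{1..n}. Phat n \<tau> s i j' \<le> Phat n \<tau> s i j)"
  proof
    assume "j \<in> rowmax n \<tau> s i"
    then show "j \<in> {1..n} \<and> (\<forall>j'\<in>{1..n}. Phat n \<tau> s i j' \<le> Phat n \<tau> s i j)"
      unfolding rowmax_def using fin by auto
  next
    assume a: "j \<in> {1..n} \<and> (\<forall>j'\<in>{1..n}. Phat n \<tau> s i j' \<le> Phat n \<tau> s i j)"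
    then have "Max (Phat n \<tau> s i ` {1..n}) = Phat n \<tau> s i j"
      by (intro Max_eqI) auto
    then show "j \<in> rowmax n \<tau> s i" using a unfolding rowmax_def by auto
  qed
  then show ?thesis unfolding c_def[symmetric] by (simp only: le)
qed

lemma card_le_x: "real (card{k\<in>{1..n}. s k \<le> x}) = real n - real (Gv n s x)"
  "real (card{k\<in>{1..n}. \<not> s k \<le> x}) = real (Gv n s x)"
  "real (card{k\<in>{1..n}. s k < x}) = real n - real (Ev n s x)"
  "real (card{k\<in>{1..n}. \<not> s k < x}) = real (Ev n s x)"
proof -
  have a: "card{k\<in>{1..n}. s k \<le> x} + card{k\<in>{1..n}. \<not> s k \<le> x} = n"
    using card_split[of "{1..n}" "\<lambda>k. s k \<le> x"] by simp
  have b: "card{k\<in>{1..n}. s k < x} + card{k\<in>{1..n}. \<not> s k < x} = n"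
    using card_split[of "{1..n}" "\<lambda>k. s k < x"] by simp
  have g: "{k\<in>{1..n}. \<not> s k \<le> x} = {k\<in>{1..n}. x < s k}" by auto
  have e: "{k\<in>{1..n}. \<not> s k < x} = {k\<in>{1..n}. x \<le> s k}" by auto
  show "real (card{k\<in>{1..n}. \<not> s k \<le> x}) = real (Gv n s x)" unfolding Gv_def g ..
  show "real (card{k\<in>{1..n}. \<not> s k < x}) = real (Ev n s x)" unfolding Ev_def e ..
  show "real (card{k\<in>{1..n}. s k \<le> x}) = real n - real (Gv n s x)"
  proof -
    have "real (card{k\<in>{1..n}. s k \<le> x}) + real (Gv n s x) = real n"
      unfolding Gv_def g[symmetric] by (simp only: of_nat_add[symmetric] a)
    then show ?thesis by linarith
  qed
  show "real (card{k\<in>{1..n}. s k < x}) = real n - real (Ev n s x)"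
  proof -
    have "real (card{k\<in>{1..n}. s k < x}) + real (Ev n s x) = real n"
      unfolding Ev_def e[symmetric] by (simp only: of_nat_add[symmetric] b)
    then show ?thesis by linarith
  qed
qed

lemma Kchar:
  assumes "1 \<le> i" "i \<le> n" "j \<in> {1..n}"
  shows "(\<forall>j'\<in>{1..n}. HH n s (real n + 1 - 2 * real i) (s j') \<le> HH n s (real n + 1 - 2 * real i) (s j))
     \<longleftrightarrow> Gv n s (s j) < i \<and> i \<le> Ev n s (s j)"
proof -
  define c where "c = real n + 1 - 2 * real i"
  define v where "v = s j"
  show ?thesis unfolding c_def[symmetric] v_def[symmetric]
  proof
    assume "Gv n s v < i \<and> i \<le> Ev n s v"
    then have G: "real (Gv n s v) + 1 \<le> real i" and E: "real i \<le> real (Ev n s v)" by auto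
    show "\<forall>j'\<in>{1..n}. HH n s c (s j') \<le> HH n s c v"
    proof
      fix j' assume "j' \<in> {1..n}"
      consider "s j' > v" | "s j' < v" | "s j' = v" by linarith
      then show "HH n s c (s j') \<le> HH n s c v"
      proof cases
        case 1
        have "HH n s c (s j') - HH n s c v \<le> (s j' - v) * (1 + 2 * real (Gv n s v) - 2 * real i)"
          using L1[OF 1, where n=n and s=s and c=c, unfolded card_le_x] by (simp add: c_def algebra_simps)
        also have "\<dots> \<le> 0" using 1 G by (intro mult_nonneg_nonpos) auto
        finally show ?thesis by simp
      next
        case 2
        have "HH n s c v - HH n s c (s j') \<ge> (v - s j') * (1 + 2 * real (Ev n s v) - 2 * real i)"
          using L2[OF 2, where n=n and s=s and c=c, unfolded card_le_x] by (simp add: c_def algebra_simps)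
        moreover have "(v - s j') * (1 + 2 * real (Ev n s v) - 2 * real i) \<ge> 0" using 2 E by auto
        ultimately show ?thesis by simp
      qed simp
    qed
  next
    assume max: "\<forall>j'\<in>{1..n}. HH n s c (s j') \<le> HH n s c v"
    have "Gv n s v < i"
    proof (rule ccontr)
      assume "\<not> Gv n s v < i"
      then have Gi: "real i \<le> real (Gv n s v)" by simp
      define A where "A = {k\<in>{1..n}. v < s k}"
      have "card A > 0" using \<open>\<not> Gv n s v < i\<close> assms(1) unfolding Gv_def A_def by linarith
      then have "A \<noteq> {}" by auto
      have fA: "finite A" unfolding A_def by simp
      define y where "y = Min (s ` A)"
      have "y \<in> s ` A" unfolding y_def using fA \<open>A \<noteq> {}\<close> by (intro Min_in) auto
      then obtain j' where j': "j' \<in> A" "s j' = y" by auto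
      have ymin: "k \<in> A \<Longrightarrow> y \<le> s k" for k unfolding y_def using fA by (intro Min_le) auto
      have vy: "v < y" using j' unfolding A_def by auto
      have e1: "{k\<in>{1..n}. s k < y} = {k\<in>{1..n}. s k \<le> v}"
        using ymin vy unfolding A_def by force
      have e2: "{k\<in>{1..n}. \<not> s k < y} = {k\<in>{1..n}. \<not> s k \<le> v}"
        using ymin vy unfolding A_def by force
      have "HH n s c y - HH n s c v \<ge> (y - v) * (1 + 2 * real (Gv n s v) - 2 * real i)"
        using L2[OF vy, where n=n and s=s and c=c, unfolded e1 e2 card_le_x] by (simp add: c_def algebra_simps)
      moreover have "(y - v) * (1 + 2 * real (Gv n s v) - 2 * real i) > 0" using vy Gi by auto
      moreover have "HH n s c y \<le> HH n s c v" using max j' unfolding A_def by auto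
      ultimately show False by simp
    qed
    moreover have "i \<le> Ev n s v"
    proof (rule ccontr)
      assume "\<not> i \<le> Ev n s v"
      then have Ei: "real (Ev n s v) + 1 \<le> real i" by simp
      define B where "B = {k\<in>{1..n}. s k < v}"
      have "real (card B) = real n - real (Ev n s v)" unfolding B_def by (rule card_le_x)
      then have "card B > 0" using Ei assms(2) by linarith
      then have "B \<noteq> {}" by auto
      have fB: "finite B" unfolding B_def by simp
      define y where "y = Max (s ` B)"
      have "y \<in> s ` B" unfolding y_def using fB \<open>B \<noteq> {}\<close> by (intro Max_in) auto
      then obtain j' where j': "j' \<in> B" "s j' = y" by auto
      have ymax: "k \<in> B \<Longrightarrow> s k \<le> y" for k unfolding y_def using fB by (intro Max_ge) auto
      have vy: "y < v" using j' unfolding B_def by auto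
      have e1: "{k\<in>{1..n}. s k \<le> y} = {k\<in>{1..n}. s k < v}"
        using ymax vy unfolding B_def by force
      have e2: "{k\<in>{1..n}. \<not> s k \<le> y} = {k\<in>{1..n}. \<not> s k < v}"
        using ymax vy unfolding B_def by force
      have "HH n s c v - HH n s c y \<le> (v - y) * (1 + 2 * real (Ev n s v) - 2 * real i)"
        using L1[OF vy, where n=n and s=s and c=c, unfolded e1 e2 card_le_x] by (simp add: c_def algebra_simps)
      moreover have "(v - y) * (1 + 2 * real (Ev n s v) - 2 * real i) < 0" using vy Ei
        by (intro mult_pos_neg) auto
      moreover have "HH n s c y \<le> HH n s c v" using max j' unfolding B_def by auto
      ultimately show False by simp
    qed
    ultimately show "Gv n s v < i \<and> i \<le> Ev n s v" by simp
  qed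
qed


lemma rowmax_char:
  assumes "\<tau> > 0" "1 \<le> i" "i \<le> n"
  shows "j \<in> rowmax n \<tau> s i \<longleftrightarrow> j \<in> {1..n} \<and> Gv n s (s j) < i \<and> i \<le> Ev n s (s j)"
proof -
  have n1: "n \<ge> 1" using assms by simp
  have a: "j \<in> rowmax n \<tau> s i \<longleftrightarrow> j \<in> {1..n} \<and>
    (\<forall>j'\<in>{1..n}. HH n s (real n + 1 - 2 * real i) (s j') \<le> HH n s (real n + 1 - 2 * real i) (s j))"
    by (rule rowmax_iff[OF assms(1) n1])
  show ?thesis
  proof (cases "j \<in> {1..n}")
    case True
    show ?thesis unfolding a Kchar[OF assms(2,3) True] using True by blast
  next
    case False
    then show ?thesis unfolding a by blast
  qed
qed

lemma rowmax_nonempty: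
  assumes "n \<ge> 1"
  shows "\<exists>j. j \<in> rowmax n \<tau> s i"
proof -
  have "Max (Phat n \<tau> s i ` {1..n}) \<in> Phat n \<tau> s i ` {1..n}"
    using assms by (intro Max_in) auto
  then obtain j where "j \<in> {1..n}" "Phat n \<tau> s i j = Max (Phat n \<tau> s i ` {1..n})" by auto
  then show ?thesis unfolding rowmax_def by blast
qed

lemma length_zlist[simp]: "length (zlist n \<tau> s i) = i"
  by (induction i) auto

lemma zlist_nth: "t < i \<Longrightarrow> zlist n \<tau> s i ! t = zlist n \<tau> s (Suc t) ! t"
proof (induction i)
  case 0 then show ?case by simp
next
  case (Suc i)
  show ?case
  proof (cases "t < i")
    case True
    then show ?thesis using Suc by (simp add: nth_append)
  next
    case False
    then have "t = i" using Suc by simp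
    then show ?thesis by simp
  qed
qed

lemma zlist_inv:
  assumes "\<tau> > 0" "n \<ge> 1"
  shows "i \<le> n \<Longrightarrow> distinct (zlist n \<tau> s i) \<and> (\<forall>t<i. zlist n \<tau> s i ! t \<in> rowmax n \<tau> s (Suc t))"
proof (induction i)
  case 0 then show ?case by simp
next
  case (Suc i)
  then have IH: "distinct (zlist n \<tau> s i)" "\<forall>t<i. zlist n \<tau> s i ! t \<in> rowmax n \<tau> s (Suc t)"
    by auto
  define Z where "Z = set (zlist n \<tau> s i)"
  define M where "M = rowmax n \<tau> s (Suc i)"
  have Mc: "j \<in> M \<longleftrightarrow> j \<in> {1..n} \<and> Gv n s (s j) < Suc i \<and> Suc i \<le> Ev n s (s j)" for j
    unfolding M_def using rowmax_char[of \<tau> "Suc i" n j s] assms Suc.prems by simp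
  obtain j0 where j0: "j0 \<in> M" using rowmax_nonempty[OF assms(2)] unfolding M_def by blast
  define v where "v = s j0"
  have cj0: "Gv n s v < Suc i" "Suc i \<le> Ev n s v" using Mc[of j0] j0 unfolding v_def by blast+
  have Meq: "M = {j\<in>{1..n}. s j = v}"
  proof
    show "M \<subseteq> {j\<in>{1..n}. s j = v}"
    proof
      fix j assume j: "j \<in> M"
      have cj: "j \<in> {1..n}" "Gv n s (s j) < Suc i" "Suc i \<le> Ev n s (s j)" using Mc[of j] j by blast+
      have "s j = v"
      proof (rule ccontr)
        assume ne: "s j \<noteq> v"
        show False
        proof (cases "s j < v")
          case True
          have "{k\<in>{1..n}. v \<le> s k} \<subseteq> {k\<in>{1..n}. s j < s k}" using True by auto
          then have "Ev n s v \<le> Gv n s (s j)" unfolding Ev_def Gv_def by (intro card_mono) auto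
          then show False using cj cj0 by linarith
        next
          case False
          then have lt: "v < s j" using ne by simp
          have "{k\<in>{1..n}. s j \<le> s k} \<subseteq> {k\<in>{1..n}. v < s k}" using lt by auto
          then have "Ev n s (s j) \<le> Gv n s v" unfolding Ev_def Gv_def by (intro card_mono) auto
          then show False using cj cj0 by linarith
        qed
      qed
      then show "j \<in> {j\<in>{1..n}. s j = v}" using cj by blast
    qed
  next
    show "{j\<in>{1..n}. s j = v} \<subseteq> M"
    proof
      fix j assume "j \<in> {j\<in>{1..n}. s j = v}"
      then have jj: "j \<in> {1..n}" "s j = v" by blast+
      show "j \<in> M" using Mc[of j] jj cj0 by simp
    qed
  qed
  have cM: "card M + Gv n s v = Ev n s v"
  proof -
    have "{k\<in>{1..n}. v \<le> s k} = M \<union> {k\<in>{1..n}. v < s k}" unfolding Meq by auto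
    moreover have "M \<inter> {k\<in>{1..n}. v < s k} = {}" unfolding Meq by auto
    moreover have "finite M" unfolding Meq by simp
    ultimately show ?thesis unfolding Ev_def Gv_def
      by (simp add: card_Un_disjoint)
  qed
  have EV: "Suc i \<le> Ev n s v" using cj0 by simp
  have sub: "Z \<inter> M \<subseteq> (\<lambda>t. zlist n \<tau> s i ! t) ` {Gv n s v..<i}"
  proof
    fix z assume z: "z \<in> Z \<inter> M"
    then obtain t where t: "t < i" "z = zlist n \<tau> s i ! t" unfolding Z_def by (auto simp: in_set_conv_nth)
    have "z \<in> rowmax n \<tau> s (Suc t)" using IH(2) t by auto
    then have "Gv n s (s z) < Suc t" using rowmax_char[of \<tau> "Suc t" n z s] assms Suc.prems t by simp
    moreover have "s z = v" using z Meq by auto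
    ultimately show "z \<in> (\<lambda>t. zlist n \<tau> s i ! t) ` {Gv n s v..<i}" using t by auto
  qed
  have "card (Z \<inter> M) \<le> i - Gv n s v"
    using card_mono[OF _ sub] card_image_le[of "{Gv n s v..<i}" "\<lambda>t. zlist n \<tau> s i ! t"] by simp
  then have "card (Z \<inter> M) < card M" using cM EV cj0 by linarith
  have ex: "\<exists>j\<in>M. j \<notin> Z"
  proof (rule ccontr)
    assume "\<not> (\<exists>j\<in>M. j \<notin> Z)"
    then have "Z \<inter> M = M" by blast
    then show False using \<open>card (Z \<inter> M) < card M\<close> by simp
  qed
  have finM: "finite M" unfolding Meq by simp
  define z where "z = choose_z n \<tau> s (Suc i) Z"
  have zdef: "z = Min {j\<in>M. j \<notin> Z}" unfolding z_def choose_z_def M_def[symmetric] using ex by simp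
  have "z \<in> {j\<in>M. j \<notin> Z}" unfolding zdef using ex finM by (intro Min_in) auto
  then have zM: "z \<in> M" and zZ: "z \<notin> Z" by auto
  have L: "zlist n \<tau> s (Suc i) = zlist n \<tau> s i @ [z]" unfolding z_def Z_def by simp
  show ?case
  proof
    show "distinct (zlist n \<tau> s (Suc i))" unfolding L using IH(1) zZ Z_def by simp
    show "\<forall>t<Suc i. zlist n \<tau> s (Suc i) ! t \<in> rowmax n \<tau> s (Suc t)"
    proof (intro allI impI)
      fix t assume "t < Suc i"
      then consider "t < i" | "t = i" by linarith
      then show "zlist n \<tau> s (Suc i) ! t \<in> rowmax n \<tau> s (Suc t)"
      proof cases
        case 1 then show ?thesis unfolding L using IH(2) by (simp add: nth_append)
      next
        case 2 then show ?thesis unfolding L using zM M_def by (simp add: nth_append)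
      qed
    qed
  qed
qed

theorem proposition2:
  fixes n :: nat and \<tau> :: real and s :: "nat \<Rightarrow> real"
  assumes "n \<ge> 1" and "\<tau> > 0"
  shows "bij_betw (zvec n \<tau> s) {1..n} {1..n}"
proof -
  have I: "distinct (zlist n \<tau> s n)" "\<forall>t<n. zlist n \<tau> s n ! t \<in> rowmax n \<tau> s (Suc t)"
    using zlist_inv[OF assms(2) assms(1), of n s] by auto
  have zv: "zvec n \<tau> s i = zlist n \<tau> s n ! (i - 1)" if "i \<in> {1..n}" for i
  proof -
    have "zlist n \<tau> s n ! (i - 1) = zlist n \<tau> s (Suc (i - 1)) ! (i - 1)"
      using that by (intro zlist_nth) auto
    moreover have h: "Suc (i - 1) = i" using that by simp
    ultimately show ?thesis unfolding zvec_def by (simp only: h)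
  qed
  have inj: "inj_on (zvec n \<tau> s) {1..n}"
  proof (rule inj_onI)
    fix a b assume a: "a \<in> {1..n}" and b: "b \<in> {1..n}" and e: "zvec n \<tau> s a = zvec n \<tau> s b"
    then have "zlist n \<tau> s n ! (a - 1) = zlist n \<tau> s n ! (b - 1)" using zv by simp
    moreover have lt: "a - 1 < length (zlist n \<tau> s n)" "b - 1 < length (zlist n \<tau> s n)" using a b by auto
    ultimately have "a - 1 = b - 1" using nth_eq_iff_index_eq[OF I(1) lt] by blast
    then show "a = b" using a b by (simp add: atLeastAtMost_iff; linarith)
  qed
  have img: "zvec n \<tau> s ` {1..n} \<subseteq> {1..n}"
  proof
    fix y assume "y \<in> zvec n \<tau> s ` {1..n}"
    then obtain i where i: "i \<in> {1..n}" "y = zvec n \<tau> s i" by auto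
    have yz: "y = zlist n \<tau> s n ! (i - 1)" using i zv by simp
    have "i - 1 < n" using i by auto
    then have "zlist n \<tau> s n ! (i - 1) \<in> rowmax n \<tau> s (Suc (i - 1))" using I(2) by blast
    then have "y \<in> rowmax n \<tau> s (Suc (i - 1))" using yz by simp
    then show "y \<in> {1..n}" unfolding rowmax_def by auto
  qed
  have "zvec n \<tau> s ` {1..n} = {1..n}" using endo_inj_surj[OF _ img inj] by simp
  then show ?thesis using inj unfolding bij_betw_def by simp
qed

end
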